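(* Let $l\ge2$ and $a,b\in\mathbb{Z}_{2l}$ be such that $X=X(\mathbb{Z}_{2l},\{\pm a,\pm b\})$ is a connected $4$-regular circulant graph, and assume $a+b=l$. If $l\equiv0\pmod4$, then $X$ does not admit perfect state transfer between (distinct) vertex type states.
   Context: For $S\subseteq\mathbb{Z}_n\setminus\{0\}$ with $S=-S$, $X(\mathbb{Z}_n,S)$ has vertex set $\mathbb{Z}_n$ and edges $\{x,y\}$ with $y-x\in S$. For a graph with symmetric arc set $\mathcal{A}$ ($t((x,y))=y$, $(x,y)^{-1}=(y,x)$): boundary matrix $d_{x,a}=\frac{1}{\sqrt{\deg x}}\delta_{x,t(a)}$, shift matrix $R_{a,b}=\delta_{a,b^{-1}}$, $U=R(2d^*d-I_{\mathcal{A}})$; $d^*e_x$ ($e_x$ the standard unit vector) is a vertex type state. Perfect state transfer from $\Phi$ to a distinct state $\Psi$ means $U^\tau\Phi=\gamma\Psi$ for some $\tau\in\mathbb{Z}_{\ge1}$ and $|\gamma|=1$. *)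

theory Defs
  imports Complex_Main
begin

text \<open>General graph given by a finite vertex set V and a symmetric arc set A \<subseteq> V \<times> V.
  An arc a = (x,y) has terminus t(a) = snd a = y and inverse (y,x).\<close>

definition gdeg :: "('a \<times> 'a) set \<Rightarrow> 'a \<Rightarrow> nat" where
  "gdeg A x = card {a \<in> A. snd a = x}"

definition bnd :: "('a \<times> 'a) set \<Rightarrow> 'a \<Rightarrow> ('a \<times> 'a) \<Rightarrow> complex" where
  "bnd A x a = (if x = snd a then complex_of_real (1 / sqrt (real (gdeg A x))) else 0)"

definition vstate :: "('a \<times> 'a) set \<Rightarrow> 'a \<Rightarrow> ('a \<times> 'a) \<Rightarrow> complex" where
  "vstate A x = (\<lambda>a. if a \<in> A then cnj (bnd A x a) else 0)"

text \<open>Coin operator 2 d^* d - I acting on arc vectors.\<close>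
definition coin :: "'a set \<Rightarrow> ('a \<times> 'a) set \<Rightarrow> (('a \<times> 'a) \<Rightarrow> complex) \<Rightarrow> ('a \<times> 'a) \<Rightarrow> complex" where
  "coin V A \<phi> = (\<lambda>a. if a \<in> A then
      2 * (\<Sum>b\<in>A. (\<Sum>x\<in>V. cnj (bnd A x a) * bnd A x b) * \<phi> b) - \<phi> a else 0)"

definition shift :: "('a \<times> 'a) set \<Rightarrow> (('a \<times> 'a) \<Rightarrow> complex) \<Rightarrow> ('a \<times> 'a) \<Rightarrow> complex" where
  "shift A \<psi> = (\<lambda>a. if a \<in> A then \<psi> (snd a, fst a) else 0)"

definition evol :: "'a set \<Rightarrow> ('a \<times> 'a) set \<Rightarrow> (('a \<times> 'a) \<Rightarrow> complex) \<Rightarrow> ('a \<times> 'a) \<Rightarrow> complex" where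
  "evol V A \<phi> = shift A (coin V A \<phi>)"

definition pst :: "'a set \<Rightarrow> ('a \<times> 'a) set \<Rightarrow> (('a \<times> 'a) \<Rightarrow> complex) \<Rightarrow> (('a \<times> 'a) \<Rightarrow> complex) \<Rightarrow> bool" where
  "pst V A \<Phi> \<Psi> \<longleftrightarrow> \<Phi> \<noteq> \<Psi> \<and>
     (\<exists>\<tau>::nat. \<exists>\<gamma>::complex. \<tau> \<ge> 1 \<and> cmod \<gamma> = 1 \<and> (evol V A ^^ \<tau>) \<Phi> = (\<lambda>a. \<gamma> * \<Psi> a))"

text \<open>Circulant graph X(Z_n, S): vertices {0..<n} (representatives of Z_n),
  arcs (x,y) with (y - x) mod n \<in> S.\<close>
definition circ_verts :: "int \<Rightarrow> int set" where
  "circ_verts n = {0..<n}"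

definition circ_arcs :: "int \<Rightarrow> int set \<Rightarrow> (int \<times> int) set" where
  "circ_arcs n S = {(x, y). x \<in> {0..<n} \<and> y \<in> {0..<n} \<and> (y - x) mod n \<in> S}"

definition gconnected :: "'a set \<Rightarrow> ('a \<times> 'a) set \<Rightarrow> bool" where
  "gconnected V A \<longleftrightarrow> (\<forall>x\<in>V. \<forall>y\<in>V. (x, y) \<in> A\<^sup>*)"

end

theory Submission
  imports Defs
begin

locale c8 =
  fixes l a b n :: int and S :: "int set" and x :: int
  assumes n_def: "n = 2*l"
    and S_def: "S = {a mod n, (-a) mod n, b mod n, (-b) mod n}"
    and l2: "l \<ge> 2"
    and deg: "\<forall>v\<in>circ_verts n. gdeg (circ_arcs n S) v = 4"
    and ab: "(a + b) mod n = l mod n"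
    and xV: "x \<in> circ_verts n"
    and l4: "l mod 4 = 0"
    and conn: "gconnected (circ_verts n) (circ_arcs n S)"
begin

abbreviation "A \<equiv> circ_arcs n S"
abbreviation "V \<equiv> circ_verts n"

lemma npos: "n > 0" using n_def l2 by simp

lemma S_sub: "s \<in> S \<Longrightarrow> 0 \<le> s \<and> s < n"
  using npos by (auto simp: S_def)

lemma arcs_into: assumes "w \<in> V"
  shows "{p \<in> A. snd p = w} = (\<lambda>s. ((w - s) mod n, w)) ` S"
proof (rule set_eqI, rule iffI)
  fix p assume "p \<in> {p \<in> A. snd p = w}"
  then obtain u where p: "p = (u, w)" "u \<in> V" "(w - u) mod n \<in> S"
    by (auto simp: circ_arcs_def circ_verts_def)
  have "(w - (w - u) mod n) mod n = u"
    using p(2) by (simp add: mod_diff_right_eq circ_verts_def)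
  then show "p \<in> (\<lambda>s. ((w - s) mod n, w)) ` S" using p by force
next
  fix p assume "p \<in> (\<lambda>s. ((w - s) mod n, w)) ` S"
  then obtain s where s: "s \<in> S" "p = ((w - s) mod n, w)" by auto
  have "(w - (w - s) mod n) mod n = s"
    using S_sub[OF s(1)] by (simp add: mod_diff_right_eq)
  then show "p \<in> {p \<in> A. snd p = w}" using s assms npos
    by (auto simp: circ_arcs_def circ_verts_def)
qed

lemma inj_into: "inj_on (\<lambda>s. ((w - s) mod n, w)) S"
proof (rule inj_onI)
  fix s t assume st: "s \<in> S" "t \<in> S" "((w - s) mod n, w) = ((w - t) mod n, w)"
  have e1: "(w - (w - s) mod n) mod n = s"
    using S_sub[OF st(1)] by (simp add: mod_diff_right_eq)
  have e2: "(w - (w - t) mod n) mod n = t"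
    using S_sub[OF st(2)] by (simp add: mod_diff_right_eq)
  have "(w - s) mod n = (w - t) mod n" using st(3) by (rule Pair_inject)
  then show "s = t" using e1 e2 by metis
qed

lemma cardS: "card S = 4"
proof -
  have "0 \<in> V" using npos by (simp add: circ_verts_def)
  then have "gdeg A 0 = 4" using deg by auto
  then have "card {p \<in> A. snd p = 0} = 4" by (simp add: gdeg_def)
  then show ?thesis using arcs_into[of 0] card_image[OF inj_into[of 0]] \<open>0 \<in> V\<close> by simp
qed

lemma finS: "finite S" by (simp add: S_def)

lemma finA: "finite A"
proof -
  have "A \<subseteq> V \<times> V" by (auto simp: circ_arcs_def circ_verts_def)
  then show ?thesis by (rule finite_subset) (simp add: circ_verts_def)
qed

lemma arc_V: "p \<in> A \<Longrightarrow> fst p \<in> V \<and> snd p \<in> V"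
  by (auto simp: circ_arcs_def circ_verts_def)

lemma S_neg: "s \<in> S \<Longrightarrow> (- s) mod n \<in> S"
  by (auto simp: S_def mod_minus_eq)

lemma arc_sym: "(u, w) \<in> A \<Longrightarrow> (w, u) \<in> A"
proof -
  assume h: "(u, w) \<in> A"
  then have "(w - u) mod n \<in> S" by (simp add: circ_arcs_def)
  then have "(- ((w - u) mod n)) mod n \<in> S" by (rule S_neg)
  moreover have "(- ((w - u) mod n)) mod n = (u - w) mod n"
    by (metis minus_diff_eq mod_minus_eq)
  ultimately show ?thesis using h by (auto simp: circ_arcs_def)
qed

lemma sqrt4: "sqrt (4::real) = 2"
  by (simp add: real_sqrt_unique)

lemma bnd_A: "p \<in> A \<Longrightarrow> bnd A z p = (if z = snd p then 1/2 else 0)"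
  using arc_V[of p] deg by (auto simp: bnd_def sqrt4)


definition N :: "(int \<Rightarrow> complex) \<Rightarrow> int \<Rightarrow> complex" where
  "N g v = (\<Sum>s\<in>S. g ((v - s) mod n))"

definition mk :: "(int \<Rightarrow> complex) \<Rightarrow> (int \<Rightarrow> complex) \<Rightarrow> int \<times> int \<Rightarrow> complex" where
  "mk f g = (\<lambda>p. if p \<in> A then (f (snd p) + g (fst p)) / 2 else 0)"

lemma sum_into: assumes "w \<in> V"
  shows "(\<Sum>p\<in>{p \<in> A. snd p = w}. h p) = (\<Sum>s\<in>S. h ((w - s) mod n, w))"
  using sum.reindex[OF inj_into[of w], of h] arcs_into[OF assms] by (simp add: comp_def)

lemma inner: assumes "p \<in> A" "q \<in> A"
  shows "(\<Sum>z\<in>V. cnj (bnd A z p) * bnd A z q) = (if snd q = snd p then 1/4 else 0)"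
proof -
  have "(\<Sum>z\<in>V. cnj (bnd A z p) * bnd A z q) = (\<Sum>z\<in>V. if z = snd p then (if snd q = snd p then 1/4 else 0) else 0)"
    by (rule sum.cong) (auto simp: bnd_A assms)
  also have "\<dots> = (if snd q = snd p then 1/4 else 0)"
    using arc_V[OF assms(1)] by (simp add: circ_verts_def)
  finally show ?thesis .
qed

lemma coin_mk: assumes "(u, w) \<in> A"
  shows "coin V A (mk f g) (u, w) = f w / 2 + N g w / 4 - g u / 2"
proof -
  have wV: "w \<in> V" using arc_V[OF assms] by simp
  have "(\<Sum>q\<in>A. (\<Sum>z\<in>V. cnj (bnd A z (u, w)) * bnd A z q) * mk f g q)
      = (\<Sum>q\<in>A. if snd q = w then mk f g q / 4 else 0)"
    by (rule sum.cong) (auto simp: inner assms)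
  also have "\<dots> = (\<Sum>q\<in>{q \<in> A. snd q = w}. mk f g q / 4)"
    by (simp add: sum.inter_filter[OF finA, symmetric])
  also have "\<dots> = (\<Sum>s\<in>S. mk f g ((w - s) mod n, w) / 4)"
    by (rule sum_into[OF wV])
  also have "\<dots> = (\<Sum>s\<in>S. (f w + g ((w - s) mod n)) / 8)"
  proof (rule sum.cong)
    fix s assume "s \<in> S"
    then have "((w - s) mod n, w) \<in> {p \<in> A. snd p = w}" using arcs_into[OF wV] by auto
    then show "mk f g ((w - s) mod n, w) / 4 = (f w + g ((w - s) mod n)) / 8"
      by (simp add: mk_def)
  qed simp
  also have "\<dots> = (card S * f w + N g w) / 8"
    by (simp add: N_def sum_divide_distrib[symmetric] sum.distrib)
  finally have e: "(\<Sum>q\<in>A. (\<Sum>z\<in>V. cnj (bnd A z (u, w)) * bnd A z q) * mk f g q) = (4 * f w + N g w) / 8"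
    using cardS by simp
  have "coin V A (mk f g) (u, w) = 2 * ((4 * f w + N g w) / 8) - mk f g (u, w)"
    using assms unfolding coin_def e by simp
  also have "\<dots> = f w / 2 + N g w / 4 - g u / 2"
    using assms by (simp add: mk_def field_simps)
  finally show ?thesis .
qed

lemma evol_mk: "evol V A (mk f g) = mk (\<lambda>v. - g v) (\<lambda>v. f v + N g v / 2)"
proof
  fix p
  show "evol V A (mk f g) p = mk (\<lambda>v. - g v) (\<lambda>v. f v + N g v / 2) p"
  proof (cases "p \<in> A")
    case True
    obtain u w where p: "p = (u, w)" by fastforce
    have "(w, u) \<in> A" using True p arc_sym by simp
    have "evol V A (mk f g) p = coin V A (mk f g) (w, u)"
      using True p by (simp add: evol_def shift_def)
    also have "\<dots> = f u / 2 + N g u / 4 - g w / 2" by (rule coin_mk[OF \<open>(w, u) \<in> A\<close>])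
    finally have l: "evol V A (mk f g) p = f u / 2 + N g u / 4 - g w / 2" .
    have r: "mk (\<lambda>v. - g v) (\<lambda>v. f v + N g v / 2) p = f u / 2 + N g u / 4 - g w / 2"
      using True p by (simp add: mk_def field_simps)
    show ?thesis using l r by simp
  next
    case False
    then show ?thesis by (simp add: evol_def shift_def mk_def)
  qed
qed

definition zn :: "int \<Rightarrow> complex" where "zn m = (if n dvd m then 1 else 0)"
definition kk :: "int \<Rightarrow> complex" where "kk m = (if l dvd m then 1 else 0)"
definition e :: "int \<Rightarrow> complex" where "e u = zn (u - x)"

fun G :: "nat \<Rightarrow> int \<Rightarrow> complex" where
  "G 0 = (\<lambda>_. 0)"
| "G (Suc 0) = e"
| "G (Suc (Suc t)) = (\<lambda>v. N (G (Suc t)) v / 2 - G t v)"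

fun F :: "nat \<Rightarrow> int \<Rightarrow> complex" where
  "F 0 = e"
| "F (Suc t) = (\<lambda>v. - G t v)"

lemma N0: "N (\<lambda>_. 0) = (\<lambda>_. 0)" by (simp add: N_def fun_eq_iff)

lemma Gstep: "G (Suc t) = (\<lambda>v. F t v + N (G t) v / 2)"
  by (cases t) (simp_all add: N0)

lemma V_eq: "u \<in> V \<Longrightarrow> w \<in> V \<Longrightarrow> n dvd (u - w) \<Longrightarrow> u = w"
proof (rule ccontr)
  assume h: "u \<in> V" "w \<in> V" "n dvd (u - w)" "u \<noteq> w"
  then have "\<bar>n\<bar> \<le> \<bar>u - w\<bar>" by (intro dvd_imp_le_int) auto
  then show False using h npos by (auto simp: circ_verts_def)
qed

lemma vstate_mk: "vstate A x = mk e (\<lambda>_. 0)"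
proof
  fix p show "vstate A x p = mk e (\<lambda>_. 0) p"
  proof (cases "p \<in> A")
    case True
    have "(n dvd (snd p - x)) = (x = snd p)"
      using V_eq[of "snd p" x] arc_V[OF True] xV by auto
    then show ?thesis using True by (simp add: vstate_def mk_def bnd_A e_def zn_def)
  qed (simp add: vstate_def mk_def)
qed

lemma state: "(evol V A ^^ t) (vstate A x) = mk (F t) (G t)"
proof (induction t)
  case 0 then show ?case by (simp add: vstate_mk)
next
  case (Suc t)
  then show ?case by (simp add: evol_mk Gstep)
qed

definition H :: "nat \<Rightarrow> int \<Rightarrow> complex" where "H t v = F t v + N (G t) v / 4"

lemma N_add: "N (\<lambda>v. f v + g v) w = N f w + N g w"
  by (simp add: N_def sum.distrib)
lemma N_diff: "N (\<lambda>v. f v - g v) w = N f w - N g w"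
  by (simp add: N_def sum_subtractf)
lemma N_neg: "N (\<lambda>v. - f v) w = - N f w"
  by (simp add: N_def sum_negf)
lemma N_div: "N (\<lambda>v. f v / c) w = N f w / c"
  by (simp add: N_def sum_divide_distrib)

lemma H_rec: "H (Suc (Suc t)) v = N (H (Suc t)) v / 2 - H t v"
proof -
  have g1: "G (Suc t) v = F t v + N (G t) v / 2" by (simp add: Gstep)
  have h1: "H (Suc (Suc t)) v = - G (Suc t) v + (N (N (G (Suc t))) v / 2 - N (G t) v) / 4"
    by (simp add: H_def N_diff N_div)
  have h2: "N (H (Suc t)) v = - N (G t) v + N (N (G (Suc t))) v / 4"
    unfolding H_def F.simps by (simp add: N_add N_neg N_div N_diff)
  show ?thesis unfolding h1 h2 H_def[of t v] g1 by (simp add: field_simps)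
qed


lemma ldn: "l dvd n" by (simp add: n_def)

lemma dvd_cong_iff: "(d::int) dvd (p - q) \<Longrightarrow> d dvd p \<longleftrightarrow> d dvd q"
proof -
  assume h: "d dvd (p - q)"
  have "d dvd q + (p - q) \<longleftrightarrow> d dvd q" using h by (rule dvd_add_left_iff)
  then show ?thesis by simp
qed

lemma zn_cong: "n dvd (p - q) \<Longrightarrow> zn p = zn q"
  unfolding zn_def using dvd_cong_iff by presburger

lemma kk_cong: "l dvd (p - q) \<Longrightarrow> kk p = kk q"
  unfolding kk_def using dvd_cong_iff by presburger

lemma kk_split: "kk m = zn m + zn (m - l)"
proof -
  have lpos: "l > 0" using l2 by simp
  have nb: "\<not> (n dvd m \<and> n dvd (m - l))"
  proof
    assume "n dvd m \<and> n dvd (m - l)"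
    then have "n dvd l" using dvd_diff[of n m "m - l"] by simp
    then have "\<bar>n\<bar> \<le> \<bar>l\<bar>" using lpos by (intro dvd_imp_le_int) auto
    then show False using lpos n_def by simp
  qed
  have "l dvd m \<longleftrightarrow> n dvd m \<or> n dvd (m - l)"
  proof
    assume "l dvd m"
    then obtain j where j: "m = l * j" by blast
    show "n dvd m \<or> n dvd (m - l)"
    proof (cases "even j")
      case True
      then obtain i where "j = 2 * i" by blast
      then have "m = n * i" using j n_def by simp
      then show ?thesis by simp
    next
      case False
      then obtain i where "j = 2 * i + 1" using oddE by blast
      then have "m - l = n * i" using j n_def by (simp add: algebra_simps)
      then show ?thesis by simp
    qed
  next
    assume "n dvd m \<or> n dvd (m - l)"
    then have "l dvd m \<or> l dvd (m - l)" using ldn dvd_trans by blast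
    moreover have "l dvd (m - l) \<Longrightarrow> l dvd m" using dvd_cong_iff[of l "m - l" m] by simp
    ultimately show "l dvd m" by blast
  qed
  then show ?thesis using nb unfolding kk_def zn_def by (cases "n dvd m"; cases "n dvd (m - l)") simp_all
qed

definition Kt :: "nat \<Rightarrow> int \<Rightarrow> complex" where
  "Kt t m = (kk (m - int t * a) + kk (m + int t * a)) / 4"
definition D :: "int \<Rightarrow> complex" where "D m = zn m - zn (m - l)"
definition cc :: "nat \<Rightarrow> complex" where
  "cc t = (if t mod 4 = 0 then 1 else if t mod 4 = 2 then -1 else 0)"
definition hh :: "nat \<Rightarrow> int \<Rightarrow> complex" where "hh t m = Kt t m + cc t * D m / 2"
definition h :: "nat \<Rightarrow> int \<Rightarrow> complex" where "h t v = hh t (v - x)"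

lemma Kt_cong: "l dvd (p - q) \<Longrightarrow> Kt t p = Kt t q"
proof -
  assume d: "l dvd (p - q)"
  have "kk (p - int t * a) = kk (q - int t * a)" by (rule kk_cong) (use d in simp)
  moreover have "kk (p + int t * a) = kk (q + int t * a)" by (rule kk_cong) (use d in simp)
  ultimately show ?thesis by (simp add: Kt_def)
qed

lemma D_cong: "n dvd (p - q) \<Longrightarrow> D p = D q"
proof -
  assume d: "n dvd (p - q)"
  have "zn p = zn q" by (rule zn_cong[OF d])
  moreover have "zn (p - l) = zn (q - l)" by (rule zn_cong) (use d in simp)
  ultimately show ?thesis by (simp add: D_def)
qed

lemma D_shift: "D (q + l) = - D q"
proof -
  have "zn (q + l) = zn (q - l)" by (rule zn_cong) (simp add: n_def)
  then show ?thesis by (simp add: D_def)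
qed

lemma hh_cong: "n dvd (p - q) \<Longrightarrow> hh t p = hh t q"
  using Kt_cong D_cong ldn dvd_trans by (metis hh_def)

lemma hh_shift: "hh t (q + l) = Kt t q - cc t * D q / 2"
proof -
  have "Kt t (q + l) = Kt t q" by (rule Kt_cong) simp
  then show ?thesis by (simp add: hh_def D_shift)
qed

lemma dvd_modn: "n dvd (c' - c) \<Longrightarrow> n dvd ((v - c mod n) mod n - (v - c'))"
proof -
  assume d: "n dvd (c' - c)"
  have "(v - c mod n) mod n - (v - c') = - ((v - c mod n) - (v - c mod n) mod n) + (c - c mod n) + (c' - c)"
    by simp
  moreover have "n dvd ((v - c mod n) - (v - c mod n) mod n)" by (rule dvd_minus_mod)
  moreover have "n dvd (c - c mod n)" by (rule dvd_minus_mod)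
  ultimately show ?thesis using d by (metis dvd_add dvd_minus_iff)
qed

lemma sum4: "card {p, q, r, s :: int} = 4 \<Longrightarrow> sum f {p, q, r, s} = f p + f q + f r + f s"
proof -
  assume c: "card {p, q, r, s :: int} = 4"
  have st: "set [p, q, r, s] = {p, q, r, s}" by simp
  have "distinct [p, q, r, s]" by (rule card_distinct) (use c st in simp)
  then have "sum f (set [p, q, r, s]) = sum_list (map f [p, q, r, s])"
    by (rule sum.distinct_set_conv_list)
  then show ?thesis by (simp add: add.assoc)
qed

lemma abd: "n dvd (a + b - l)"
  using ab by (simp add: mod_eq_dvd_iff)

lemma Nper: assumes per: "\<And>p q. n dvd (p - q) \<Longrightarrow> g p = g q"
  shows "N g v = g (v - a) + g (v + a) + g (v + l + a) + g (v + l - a)"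
proof -
  have "N g v = g ((v - a mod n) mod n) + g ((v - (-a) mod n) mod n) + g ((v - b mod n) mod n) + g ((v - (-b) mod n) mod n)"
    unfolding N_def using cardS by (simp add: S_def sum4)
  moreover have "g ((v - a mod n) mod n) = g (v - a)"
    by (rule per, rule dvd_modn) simp
  moreover have "g ((v - (-a) mod n) mod n) = g (v - (-a))"
    by (rule per, rule dvd_modn) simp
  moreover have "g ((v - b mod n) mod n) = g (v - (- l - a))"
  proof (rule per, rule dvd_modn)
    have "- l - a - b = - (a + b - l) - n" using n_def by simp
    then show "n dvd (- l - a - b)" using abd by (metis dvd_diff dvd_minus_iff dvd_refl)
  qed
  moreover have "g ((v - (-b) mod n) mod n) = g (v - (a - l))"
  proof (rule per, rule dvd_modn)
    show "n dvd (a - l - - b)" using abd by (simp add: algebra_simps)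
  qed
  ultimately show ?thesis by (simp add: algebra_simps)
qed

lemma h_per: "n dvd (p - q) \<Longrightarrow> h t p = h t q"
  unfolding h_def by (rule hh_cong) simp

lemma e_per: "n dvd (p - q) \<Longrightarrow> e p = e q"
  unfolding e_def by (rule zn_cong) simp


lemma N_h: "N (h t) v = 2 * Kt t (v - x - a) + 2 * Kt t (v - x + a)"
proof -
  have "N (h t) v = h t (v - a) + h t (v + a) + h t (v + l + a) + h t (v + l - a)"
    by (rule Nper) (rule h_per)
  moreover have "h t (v - a) = Kt t (v - x - a) + cc t * D (v - x - a) / 2"
    by (simp add: h_def hh_def algebra_simps)
  moreover have "h t (v + a) = Kt t (v - x + a) + cc t * D (v - x + a) / 2"
    by (simp add: h_def hh_def algebra_simps)
  moreover have "h t (v + l + a) = Kt t (v - x + a) - cc t * D (v - x + a) / 2"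
  proof -
    have "v + l + a - x = (v - x + a) + l" by simp
    then show ?thesis by (simp only: h_def hh_shift)
  qed
  moreover have "h t (v + l - a) = Kt t (v - x - a) - cc t * D (v - x - a) / 2"
  proof -
    have "v + l - a - x = (v - x - a) + l" by simp
    then show ?thesis by (simp only: h_def hh_shift)
  qed
  ultimately show ?thesis by simp
qed

lemma Kt_rec: "Kt (Suc t) (m - a) + Kt (Suc t) (m + a) - Kt t m = Kt (Suc (Suc t)) m"
proof -
  have 1: "m - a - int (Suc t) * a = m - int (Suc (Suc t)) * a" by (simp add: algebra_simps)
  have 2: "m - a + int (Suc t) * a = m + int t * a" by (simp add: algebra_simps)
  have 3: "m + a - int (Suc t) * a = m - int t * a" by (simp add: algebra_simps)
  have 4: "m + a + int (Suc t) * a = m + int (Suc (Suc t)) * a" by (simp add: algebra_simps)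
  show ?thesis unfolding Kt_def 1 2 3 4 by (simp add: field_simps)
qed

lemma cc_rec: "cc (Suc (Suc t)) = - cc t"
proof -
  have c: "(t mod 4 = 0 \<and> Suc (Suc t) mod 4 = 2) \<or> (t mod 4 = 1 \<and> Suc (Suc t) mod 4 = 3) \<or>
    (t mod 4 = 2 \<and> Suc (Suc t) mod 4 = 0) \<or> (t mod 4 = 3 \<and> Suc (Suc t) mod 4 = 1)" by presburger
  then show ?thesis unfolding cc_def by auto
qed

lemma hh_rec: "hh (Suc (Suc t)) m = (2 * Kt (Suc t) (m - a) + 2 * Kt (Suc t) (m + a)) / 2 - hh t m"
  unfolding hh_def cc_rec Kt_rec[of t m, symmetric] by (simp add: field_simps)

lemma H_eq: "H t = h t \<and> H (Suc t) = h (Suc t)"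
proof (induction t)
  case 0
  have A0: "H 0 = h 0"
  proof
    fix v
    have "H 0 v = zn (v - x)" by (simp add: H_def N0 e_def)
    moreover have "h 0 v = zn (v - x)"
      by (simp add: h_def hh_def Kt_def cc_def D_def kk_split field_simps)
    ultimately show "H 0 v = h 0 v" by simp
  qed
  have A1: "H 1 = h 1"
  proof
    fix v
    have "H 1 v = N e v / 4" by (simp add: H_def)
    also have "N e v = e (v - a) + e (v + a) + e (v + l + a) + e (v + l - a)"
      by (rule Nper) (rule e_per)
    also have "\<dots> = zn (v - x - a) + zn (v - x + a) + zn (v - x + a - l) + zn (v - x - a - l)"
    proof -
      have "e (v - a) = zn (v - x - a)" unfolding e_def by (rule zn_cong) simp
      moreover have "e (v + a) = zn (v - x + a)" unfolding e_def by (rule zn_cong) simp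
      moreover have "e (v + l + a) = zn (v - x + a - l)" unfolding e_def by (rule zn_cong) (simp add: n_def)
      moreover have "e (v + l - a) = zn (v - x - a - l)" unfolding e_def by (rule zn_cong) (simp add: n_def)
      ultimately show ?thesis by simp
    qed
    finally have f1: "H 1 v = (zn (v - x - a) + zn (v - x + a) + zn (v - x + a - l) + zn (v - x - a - l)) / 4" .
    have f2: "h 1 v = (zn (v - x - a) + zn (v - x + a) + zn (v - x + a - l) + zn (v - x - a - l)) / 4"
      by (simp add: h_def hh_def Kt_def cc_def kk_split field_simps)
    show "H 1 v = h 1 v" by (simp only: f1 f2)
  qed
  show ?case using A0 A1 by simp
next
  case (Suc t)
  then have i1: "H t = h t" and i2: "H (Suc t) = h (Suc t)" by auto
  have "H (Suc (Suc t)) = h (Suc (Suc t))"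
  proof
    fix v
    have "H (Suc (Suc t)) v = N (h (Suc t)) v / 2 - h t v" using H_rec i1 i2 by simp
    also have "\<dots> = hh (Suc (Suc t)) (v - x)"
      by (simp add: N_h hh_rec h_def)
    finally show "H (Suc (Suc t)) v = h (Suc (Suc t)) v" by (simp add: h_def)
  qed
  then show ?case using i2 by simp
qed


lemma a_odd: "odd a"
proof (rule ccontr)
  assume ea: "\<not> odd a"
  have el: "even l" using l4 by presburger
  have en: "even n" using n_def by simp
  have emod: "even (z mod n) \<longleftrightarrow> even z" for z
  proof -
    have zz: "z = n * (z div n) + z mod n" by simp
    have "even (n * (z div n))" using en by simp
    then show ?thesis using zz by (metis even_add)
  qed
  obtain k where k: "a + b - l = n * k" using abd by blast
  have eb: "even b"
  proof -
    have "b = l - a + n * k" using k by simp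
    then show ?thesis using ea el en by simp
  qed
  have eS: "s \<in> S \<Longrightarrow> even s" for s
  proof -
    assume "s \<in> S"
    then have "s = a mod n \<or> s = (-a) mod n \<or> s = b mod n \<or> s = (-b) mod n" by (simp add: S_def)
    moreover have "even (a mod n)" "even ((-a) mod n)" "even (b mod n)" "even ((-b) mod n)"
      using emod ea eb by simp_all
    ultimately show "even s" by (elim disjE) simp_all
  qed
  have stp: "(u, w) \<in> A \<Longrightarrow> even u \<Longrightarrow> even w" for u w
  proof -
    assume "(u, w) \<in> A" "even u"
    then have "even ((w - u) mod n)" using eS by (simp add: circ_arcs_def)
    then have "even (w - u)" using emod by simp
    then show "even w" using \<open>even u\<close> by simp
  qed
  have reach: "(0, z) \<in> A\<^sup>* \<Longrightarrow> even z" for z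
  proof (induction rule: rtrancl_induct)
    case base then show ?case by simp
  next
    case (step y z) then show ?case using stp by blast
  qed
  have "0 \<in> V" "1 \<in> V" using n_def l2 by (auto simp: circ_verts_def)
  then have "(0, 1) \<in> A\<^sup>*" using conn by (simp add: gconnected_def)
  then show False using reach by fastforce
qed

lemma not4: "t mod 4 = 2 \<Longrightarrow> \<not> l dvd (int t * a)"
proof
  assume t: "t mod 4 = 2" and d: "l dvd (int t * a)"
  have "4 dvd l" using l4 by presburger
  then have d4: "4 dvd (int t * a)" using d dvd_trans by blast
  define q where "q = t div 4"
  have q: "t = 4 * q + 2" using t unfolding q_def by presburger
  have it0: "int t * a = (4 * int q + 2) * a" using q by simp
  have it: "int t * a = 2 * ((2 * int q + 1) * a)" unfolding it0 by algebra
  have gen: "\<And>m::int. 4 dvd 2 * m \<Longrightarrow> 2 dvd m" by presburger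
  have "4 dvd 2 * ((2 * int q + 1) * a)" using d4 by (simp only: it)
  then have "2 dvd ((2 * int q + 1) * a)" by (rule gen)
  then show False using a_odd by simp
qed

lemma kk_norm: "cmod (kk p) \<le> 1" by (simp add: kk_def)

lemma Kt_norm: "cmod (Kt t m) \<le> 1/2"
proof -
  have "cmod (Kt t m) = cmod (kk (m - int t * a) + kk (m + int t * a)) / 4"
    by (simp add: Kt_def norm_divide)
  moreover have "cmod (kk (m - int t * a) + kk (m + int t * a)) \<le> 2"
    using norm_triangle_ineq[of "kk (m - int t * a)" "kk (m + int t * a)"]
      kk_norm[of "m - int t * a"] kk_norm[of "m + int t * a"] by linarith
  ultimately show ?thesis by simp
qed

lemma bound: assumes yV: "y \<in> V" and yx: "y \<noteq> x" shows "cmod (hh t (y - x)) < 1"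
proof -
  have nd: "\<not> n dvd (y - x)" using V_eq[OF yV xV] yx by auto
  have z0: "zn (y - x) = 0" using nd by (simp add: zn_def)
  show ?thesis
  proof (cases "n dvd (y - x - l)")
    case False
    then have "hh t (y - x) = Kt t (y - x)" using nd by (simp add: hh_def D_def zn_def)
    then show ?thesis using Kt_norm[of t "y - x"] by simp
  next
    case True
    then have ld: "l dvd (y - x)" using ldn dvd_cong_iff[of l "y - x" l] dvd_trans by auto
    have k1: "kk (y - x - int t * a) = kk (- (int t * a))" by (rule kk_cong) (use ld in simp)
    have k2: "kk (y - x + int t * a) = kk (int t * a)" by (rule kk_cong) (use ld in simp)
    have hv: "hh t (y - x) = (kk (int t * a) + kk (int t * a)) / 4 - cc t / 2"
    proof -
      have D1: "D (y - x) = -1" using True z0 by (simp add: D_def zn_def)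
      have km: "kk (- (int t * a)) = kk (int t * a)" by (simp add: kk_def)
      have "Kt t (y - x) = (kk (int t * a) + kk (int t * a)) / 4"
        unfolding Kt_def k1 k2 km by simp
      then show ?thesis by (simp add: hh_def D1)
    qed
    show ?thesis
    proof (cases "t mod 4 = 2")
      case True
      have hv2: "hh t (y - x) = 1/2" unfolding hv using not4[OF True] True by (simp add: kk_def cc_def)
      show ?thesis unfolding hv2 by (simp add: norm_divide)
    next
      case False
      have mem: "hh t (y - x) \<in> {0, 1/2, -1/2}" unfolding hv using False unfolding kk_def cc_def
        by (cases "l dvd int t * a"; cases "t mod 4 = 0") simp_all
      have c0: "cmod (0::complex) < 1" by simp
      have c1: "cmod (1/2::complex) < 1" by (simp add: norm_divide)
      have c2: "cmod (-1/2::complex) < 1" by (simp add: norm_divide)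
      show ?thesis using mem c0 c1 c2 by (metis empty_iff insertE)
    qed
  qed
qed

lemma no_pst: assumes yV: "y \<in> V" shows "\<not> pst V A (vstate A x) (vstate A y)"
proof
  assume p: "pst V A (vstate A x) (vstate A y)"
  then have ne: "vstate A x \<noteq> vstate A y" by (simp add: pst_def)
  then have yx: "y \<noteq> x" by auto
  from p obtain \<tau> :: nat and \<gamma> :: complex where g1: "cmod \<gamma> = 1"
    and ev: "(evol V A ^^ \<tau>) (vstate A x) = (\<lambda>p. \<gamma> * vstate A y p)"
    unfolding pst_def by blast
  have mk_eq: "mk (F \<tau>) (G \<tau>) = (\<lambda>p. \<gamma> * vstate A y p)" using ev state by simp
  have each: "G \<tau> ((y - s) mod n) = \<gamma> - F \<tau> y" if s: "s \<in> S" for s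
  proof -
    have pin: "((y - s) mod n, y) \<in> A" using arcs_into[OF yV] s by auto
    have "mk (F \<tau>) (G \<tau>) ((y - s) mod n, y) = \<gamma> * vstate A y ((y - s) mod n, y)"
      using mk_eq by (rule fun_cong)
    then have h2: "(F \<tau> y + G \<tau> ((y - s) mod n)) / 2 = \<gamma> / 2"
      using pin by (simp add: mk_def vstate_def bnd_A)
    have "F \<tau> y + G \<tau> ((y - s) mod n) = 2 * ((F \<tau> y + G \<tau> ((y - s) mod n)) / 2)" by simp
    also have "\<dots> = 2 * (\<gamma> / 2)" by (simp only: h2)
    also have "\<dots> = \<gamma>" by simp
    finally show ?thesis by (simp add: algebra_simps)
  qed
  have "N (G \<tau>) y = (\<Sum>s\<in>S. \<gamma> - F \<tau> y)" unfolding N_def using each by (rule sum.cong[OF refl])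
  also have "\<dots> = 4 * (\<gamma> - F \<tau> y)" using cardS by simp
  finally have "H \<tau> y = \<gamma>" by (simp add: H_def field_simps)
  then have "hh \<tau> (y - x) = \<gamma>" using H_eq[of \<tau>] by (simp add: h_def)
  then show False using bound[OF yV yx, of \<tau>] g1 by simp
qed


end

theorem lemma8p2:
  fixes l a b :: int
  defines "n \<equiv> 2 * l"
  defines "S \<equiv> {a mod n, (- a) mod n, b mod n, (- b) mod n}"
  assumes "l \<ge> 2"
    and "0 \<notin> S"
    and "\<forall>x\<in>circ_verts n. gdeg (circ_arcs n S) x = 4"
    and "gconnected (circ_verts n) (circ_arcs n S)"
    and "(a + b) mod n = l mod n"
    and "l mod 4 = 0"
  shows "\<forall>x\<in>circ_verts n. \<forall>y\<in>circ_verts n.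
           \<not> pst (circ_verts n) (circ_arcs n S) (vstate (circ_arcs n S) x) (vstate (circ_arcs n S) y)"
proof (intro ballI)
  fix x y assume xV: "x \<in> circ_verts n" and yV: "y \<in> circ_verts n"
  interpret c8 l a b n S x
    by (unfold_locales) (use assms xV in \<open>simp_all add: n_def S_def\<close>)
  show "\<not> pst (circ_verts n) (circ_arcs n S) (vstate (circ_arcs n S) x) (vstate (circ_arcs n S) y)"
    by (rule no_pst[OF yV])
qed

end
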